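(* Let $w:=3/\sqrt{2}$, and for $t\in[0,w]$ put $x:=-t+wi$. Define $M(q,t):=|(1+qx)(1+q/x)|$ and $M_0(q,t):=(1-q)M(q,t)$. Then: for each fixed $q\in[0.6,1]$, the functions $t\mapsto M(q,t)$ and $t\mapsto M_0(q,t)$ on $[0,w]$ attain their maximum at $t=0$; and for each fixed $q\in[0.6,0.75]$, the functions $t\mapsto M(q,t)$ and $t\mapsto M_0(q,t)$ on $[1,w]$ attain their maximum at $t=1$. *)

theory Defs
  imports "HOL-Analysis.Analysis"
begin

definition w4 :: real where "w4 = 3 / sqrt 2"

definition xpt :: "real \<Rightarrow> complex" where
  "xpt t = Complex (- t) w4"

definition Mf :: "real \<Rightarrow> real \<Rightarrow> real" where
  "Mf q t = cmod ((1 + of_real q * xpt t) * (1 + of_real q / xpt t))"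

definition M0f :: "real \<Rightarrow> real \<Rightarrow> real" where
  "M0f q t = (1 - q) * Mf q t"

end

theory Submission
  imports Defs
begin

lemma w4sq: "w4^2 = 9/2" unfolding w4_def by (simp add: power_divide)
lemma w4pos: "w4 > 0" unfolding w4_def by simp

lemma div_cross: "0 < (b::real) \<Longrightarrow> 0 < d \<Longrightarrow> a*d \<le> c*b \<Longrightarrow> a/b \<le> c/d"
  by (simp add: divide_simps)

definition G :: "real \<Rightarrow> real \<Rightarrow> real" where
 "G q t = ((1-q*t)^2 + q^2*(9/2))*((q-t)^2+9/2)/(t^2+9/2)"

lemma Mf_eq: "Mf q t = sqrt (G q t)"
proof -
  have x0: "xpt t \<noteq> 0" using w4pos unfolding xpt_def by (auto simp: complex_eq_iff)
  have e1: "1 + of_real q * xpt t = Complex (1 - q*t) (q*w4)"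
    unfolding xpt_def by (simp add: complex_eq_iff)
  have e2: "1 + of_real q / xpt t = (xpt t + of_real q) / xpt t" using x0 by (simp add: field_simps)
  have e3: "xpt t + of_real q = Complex (q - t) w4" unfolding xpt_def by (simp add: complex_eq_iff)
  have "Mf q t = cmod (Complex (1 - q*t) (q*w4)) * (cmod (Complex (q - t) w4) / cmod (Complex (-t) w4))"
    unfolding Mf_def norm_mult e1 e2 norm_divide e3 by (simp add: xpt_def)
  also have "\<dots> = sqrt ((1-q*t)^2 + q^2*(9/2)) * (sqrt ((q-t)^2+9/2) / sqrt (t^2+9/2))"
    by (simp add: cmod_def power_mult_distrib w4sq)
  also have "\<dots> = sqrt (G q t)" unfolding G_def by (simp add: real_sqrt_mult real_sqrt_divide)
  finally show ?thesis .
qed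

lemma id0: "((1-(q::real)*t)^2 + q^2*(9/2))*((q-t)^2+9/2)*(9/2) - ((1-q*0)^2 + q^2*(9/2))*((q-0)^2+9/2)*(t^2+9/2)
  = t*q*(q*(t*(9/2*(t^2+9/2)+17)) - (1+q^2)*(9*((t^2+9/2)+1)))"
  by (simp add: field_simps power2_eq_square)

lemma id1: "((1-(q::real)*t)^2 + q^2*(9/2))*((q-t)^2+9/2)*(1+9/2) - ((1-q*1)^2 + q^2*(9/2))*((q-1)^2+9/2)*(t^2+9/2)
  = (t-1)*q*(q*((t+1)*(11/2*(t^2+9/2)+17)) - (1+q^2)*(11*(t^2+9/2)-2*t+9))"
  by (simp add: field_simps power2_eq_square)

lemma part0:
  fixes q t :: real assumes q: "0 \<le> q" and t: "0 \<le> t" "t^2 \<le> 9/2"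
  shows "G q t \<le> G q 0"
proof -
  let ?s = "t^2+9/2"
  have q2: "2*q \<le> 1 + q^2"
  proof -
    have "0 \<le> (q - 1)^2" by simp
    thus ?thesis by (simp add: power2_eq_square algebra_simps)
  qed
  have t3: "t^3 \<le> 9/2*t" using mult_right_mono[OF t(2) t(1)] by (simp add: power3_eq_cube power2_eq_square mult.commute)
  have c: "t*(9/2*?s+17) \<le> 18*(?s+1)"
  proof -
    have t3': "t*t*t \<le> 9/2*t" using t3 by (simp add: power3_eq_cube)
    have sq: "0 \<le> t*t - 16/5*t + 64/25" using zero_le_power2[of "t - 1.6"] by (simp add: power2_eq_square algebra_simps)
    have e1: "t*(9/2*?s+17) = 9/2*(t*t*t) + 149/4*t" by (simp add: power2_eq_square algebra_simps)
    have e2: "18*(?s+1) = 18*(t*t) + 99" by (simp add: power2_eq_square algebra_simps)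
    show ?thesis unfolding e1 e2 using t3' sq t by linarith
  qed
  have X0: "0 \<le> t*(9/2*?s+17)" using t by simp
  have "q*(t*(9/2*?s+17)) \<le> ((1+q^2)/2) * (t*(9/2*?s+17))"
    using mult_right_mono[OF _ X0, of q "(1+q^2)/2"] q2 by simp
  also have "\<dots> \<le> ((1+q^2)/2) * (18*(?s+1))" using c by (intro mult_left_mono) auto
  finally have E0: "q*(t*(9/2*?s+17)) \<le> ((1+q^2)/2) * (18*(?s+1))" .
  have e: "((1+q^2)/2) * (18*(?s+1)) = (1+q^2)*(9*(?s+1))" by simp
  have E: "q*(t*(9/2*?s+17)) - (1+q^2)*(9*(?s+1)) \<le> 0" using E0 unfolding e by linarith
  have "t*q*(q*(t*(9/2*?s+17)) - (1+q^2)*(9*(?s+1))) \<le> 0"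
    using E q t by (simp add: mult_nonneg_nonpos)
  hence "((1-q*t)^2 + q^2*(9/2))*((q-t)^2+9/2)*(9/2) \<le> ((1-q*0)^2 + q^2*(9/2))*((q-0)^2+9/2)*(t^2+9/2)"
    using id0[of q t] by linarith
  note F = this
  show ?thesis unfolding G_def
  proof (rule div_cross)
    show "0 < t^2+9/2" using zero_le_power2[of t] by linarith
    show "0 < (0::real)^2+9/2" by simp
    show "((1-q*t)^2 + q^2*(9/2))*((q-t)^2+9/2)*(0^2+9/2) \<le> ((1-q*0)^2 + q^2*(9/2))*((q-0)^2+9/2)*(t^2+9/2)"
      using F by (simp only: zero_power2 add_0_left)
  qed
qed

lemma part1:
  fixes q t :: real assumes q: "0.6 \<le> q" "q \<le> 0.75" and t: "1 \<le> t" "t^2 \<le> 9/2"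
  shows "G q t \<le> G q 1"
proof -
  let ?s = "t^2+9/2"
  let ?D = "11*?s-2*t+9" and ?X = "(t+1)*(11/2*?s+17)"
  have q2: "25*q \<le> 12*(1 + q^2)"
  proof -
    have "(3 - 4*q)*(4 - 3*q) \<ge> 0" using q by (intro mult_nonneg_nonneg) auto
    thus ?thesis by (simp add: algebra_simps power2_eq_square)
  qed
  have t3: "t^3 \<le> 9/2*t" using mult_right_mono[OF t(2)] t by (simp add: power3_eq_cube power2_eq_square mult.commute)
  have c: "12*?X \<le> 25*?D"
  proof -
    have t3': "t*t*t \<le> 9/2*t" using t3 by (simp add: power3_eq_cube)
    have sq: "0 \<le> t*t - 203/50*t + 41209/10000" using zero_le_power2[of "t - 2.03"] by (simp add: power2_eq_square algebra_simps)
    have e1: "12*?X = 66*(t*t*t) + 66*(t*t) + 501*t + 501" by (simp add: power2_eq_square field_simps)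
    have e2: "25*?D = 275*(t*t) - 50*t + 2925/2" by (simp add: power2_eq_square algebra_simps)
    show ?thesis unfolding e1 e2 using t3' sq t by linarith
  qed
  have X0: "0 \<le> ?X" using t by simp
  have "25*(q*?X) \<le> (12*(1+q^2)) * ?X"
    using mult_right_mono[OF q2 X0] by simp
  also have "\<dots> = (1+q^2) * (12*?X)" by (simp only: mult_ac)
  also have "\<dots> \<le> (1+q^2) * (25*?D)" by (rule mult_left_mono[OF c]) (simp add: add_nonneg_nonneg)
  finally have E0: "25*(q*?X) \<le> (1+q^2) * (25*?D)" .
  have e: "(1+q^2)*(25*?D) = 25*((1+q^2)*?D)" by (simp only: mult_ac)
  have E: "q*?X - (1+q^2)*?D \<le> 0" using E0 unfolding e by linarith
  have "(t-1)*q*(q*?X - (1+q^2)*?D) \<le> 0"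
    using E q t by (simp add: mult_nonneg_nonpos)
  hence "((1-q*t)^2 + q^2*(9/2))*((q-t)^2+9/2)*(1+9/2) \<le> ((1-q*1)^2 + q^2*(9/2))*((q-1)^2+9/2)*(t^2+9/2)"
    using id1[of q t] by linarith
  note F = this
  show ?thesis unfolding G_def
  proof (rule div_cross)
    show "0 < t^2+9/2" using zero_le_power2[of t] by linarith
    show "0 < (1::real)^2+9/2" by simp
    show "((1-q*t)^2 + q^2*(9/2))*((q-t)^2+9/2)*(1^2+9/2) \<le> ((1-q*1)^2 + q^2*(9/2))*((q-1)^2+9/2)*(t^2+9/2)"
      using F by (simp only: power_one)
  qed
qed

lemma sq_le_w4: "0 \<le> t \<Longrightarrow> t \<le> w4 \<Longrightarrow> t^2 \<le> 9/2"
  using power_mono[of t w4 2] w4sq by simp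

theorem lemma4:
  shows "(\<forall>q\<in>{0.6..1::real}. \<forall>t\<in>{0..w4}.
            Mf q t \<le> Mf q 0 \<and> M0f q t \<le> M0f q 0)
       \<and> (\<forall>q\<in>{0.6..0.75::real}. \<forall>t\<in>{1..w4}.
            Mf q t \<le> Mf q 1 \<and> M0f q t \<le> M0f q 1)"
proof (rule conjI; intro ballI)
  fix q t :: real
  assume q: "q \<in> {0.6..1}" and t: "t \<in> {0..w4}"
  have "Mf q t \<le> Mf q 0" unfolding Mf_eq
    using part0[of q t] q t sq_le_w4[of t] by simp
  moreover have "0 \<le> 1 - q" using q by simp
  ultimately show "Mf q t \<le> Mf q 0 \<and> M0f q t \<le> M0f q 0"
    unfolding M0f_def by (simp add: mult_left_mono)
next
  fix q t :: real
  assume q: "q \<in> {0.6..0.75}" and t: "t \<in> {1..w4}"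
  have "Mf q t \<le> Mf q 1" unfolding Mf_eq
    using part1[of q t] q t sq_le_w4[of t] by simp
  moreover have "0 \<le> 1 - q" using q by simp
  ultimately show "Mf q t \<le> Mf q 1 \<and> M0f q t \<le> M0f q 1"
    unfolding M0f_def by (simp add: mult_left_mono)
qed

end
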